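(* Let $q\geq 2$ be an integer, $z\geq 2$, $\beta>0$, and let $\bar\nu\in\mathcal{P}(\{1,\dots,q\})$ be a global minimizer of $\Gamma_{\beta,q,z}(\nu)=-\frac{\beta}{z}\sum_{i=1}^q\nu_i^z+\sum_{i=1}^q\nu_i\log(q\nu_i)$ whose coordinates are ordered, $\bar\nu_1\geq\bar\nu_2\geq\dots\geq\bar\nu_q$. Define $g(x):=\beta x^{z-1}-\log(qx)$ for $x\in(0,1]$ and let $\tilde u:=(\beta(z-1))^{-1/(z-1)}$ be the minimizer of $g$. Then: (i) If $\bar\nu_1\leq\tilde u$, then $\bar\nu_k=\bar\nu_1$ for all $k\in\{2,\dots,q\}$, so $\bar\nu=(\frac1q,\dots,\frac1q)^T$. (ii) If $\bar\nu_1>\tilde u$, then $\bar\nu_k\in\{\bar\nu_0,\bar\nu_1\}$ for all $k\in\{2,\dots,q\}$, where $\bar\nu_0<\bar\nu_1$ satisfies $g(\bar\nu_0)=g(\bar\nu_1)$; in this case $$\bar\nu=(\underbrace{\bar\nu_1,\dots,\bar\nu_1}_{l\text{ times}},\bar\nu_0,\dots,\bar\nu_0)^T\quad\text{with }\bar\nu_1=\frac{1-(q-l)\bar\nu_0}{l},$$ for some $1\leq l\leq q$.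
   Context: $\mathcal{P}(\{1,\dots,q\})$ denotes the set of probability vectors on $\{1,\dots,q\}$. *)

theory Defs
  imports Complex_Main
begin

text \<open>Probability vectors on {1,...,q}, represented as functions nat => real
  (only the values on {1..q} matter).\<close>
definition prob_vec :: "nat \<Rightarrow> (nat \<Rightarrow> real) \<Rightarrow> bool" where
  "prob_vec q \<nu> \<longleftrightarrow> (\<forall>i\<in>{1..q}. \<nu> i \<ge> 0) \<and> (\<Sum>i=1..q. \<nu> i) = 1"

text \<open>The free energy functional Gamma_{beta,q,z}; convention 0 log 0 = 0
  holds since ln 0 = 0 in Isabelle.\<close>
definition Gamma :: "real \<Rightarrow> nat \<Rightarrow> real \<Rightarrow> (nat \<Rightarrow> real) \<Rightarrow> real" where
  "Gamma \<beta> q z \<nu> = - (\<beta> / z) * (\<Sum>i=1..q. \<nu> i powr z)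
                     + (\<Sum>i=1..q. \<nu> i * ln (real q * \<nu> i))"

definition gfun :: "real \<Rightarrow> nat \<Rightarrow> real \<Rightarrow> real \<Rightarrow> real" where
  "gfun \<beta> q z x = \<beta> * x powr (z - 1) - ln (real q * x)"

definition u_tilde :: "real \<Rightarrow> real \<Rightarrow> real" where
  "u_tilde \<beta> z = (\<beta> * (z - 1)) powr (- 1 / (z - 1))"

end

theory Submission imports Defs begin

definition phi :: "real \<Rightarrow> nat \<Rightarrow> real \<Rightarrow> real \<Rightarrow> real" where
  "phi \<beta> q z x = - (\<beta> / z) * x powr z + x * ln (real q * x)"

lemma Gamma_phi: "Gamma \<beta> q z \<nu> = (\<Sum>i=1..q. phi \<beta> q z (\<nu> i))"
  unfolding Gamma_def phi_def by (simp only: sum.distrib sum_distrib_left)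

lemma sum_upd2:
  fixes F :: "'a \<Rightarrow> real"
  assumes "finite A" "i \<in> A" "j \<in> A" "i \<noteq> j"
  shows "(\<Sum>k\<in>A. F ((f(i := a, j := b)) k)) + F (f i) + F (f j) = (\<Sum>k\<in>A. F (f k)) + F a + F b"
proof -
  let ?g = "f(i := a, j := b)"
  have r1: "\<And>h. sum h A = h i + sum h (A - {i})" using assms by (simp add: sum.remove)
  have r2: "\<And>h. sum h (A - {i}) = h j + sum h (A - {i} - {j})" using assms by (simp add: sum.remove)
  have c: "(\<Sum>k\<in>A - {i} - {j}. F (?g k)) = (\<Sum>k\<in>A - {i} - {j}. F (f k))"
    by (rule sum.cong) auto
  have e1: "(\<Sum>k\<in>A. F (?g k)) = F (?g i) + (F (?g j) + (\<Sum>k\<in>A - {i} - {j}. F (?g k)))"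
    using r1[of "\<lambda>k. F (?g k)"] r2[of "\<lambda>k. F (?g k)"] by (simp only:)
  have e2: "(\<Sum>k\<in>A. F (f k)) = F (f i) + (F (f j) + (\<Sum>k\<in>A - {i} - {j}. F (f k)))"
    using r1[of "\<lambda>k. F (f k)"] r2[of "\<lambda>k. F (f k)"] by (simp only:)
  have ga: "?g i = a" "?g j = b" using assms by auto
  have e3: "(\<Sum>k\<in>A. F (?g k)) = F a + (F b + (\<Sum>k\<in>A - {i} - {j}. F (f k)))"
    using e1 unfolding ga c .
  show ?thesis using e3 e2 by linarith
qed

lemma phi_deriv:
  assumes "x > 0" "q > 0" "z \<noteq> 0"
  shows "(phi \<beta> q z has_real_derivative (1 - gfun \<beta> q z x)) (at x)"
proof -
  have "((\<lambda>x. - (\<beta> / z) * x powr z + x * ln (real q * x)) has_real_derivative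
      (- (\<beta> / z) * (z * x powr (z - 1)) + (x * (1 / (real q * x) * real q) + 1 * ln (real q * x)))) (at x)"
    using assms by (intro DERIV_add DERIV_cmult DERIV_mult' DERIV_ident has_real_derivative_powr
        DERIV_chain2[OF DERIV_ln_divide] DERIV_cmult_Id) auto
  moreover have "(- (\<beta> / z) * (z * x powr (z - 1)) + (x * (1 / (real q * x) * real q) + 1 * ln (real q * x)))
     = 1 - gfun \<beta> q z x" using assms by (simp add: gfun_def)
  ultimately show ?thesis unfolding phi_def[abs_def] by simp
qed

lemma g_deriv:
  assumes "x > 0" "q > 0"
  shows "(gfun \<beta> q z has_real_derivative ((\<beta> * (z - 1) * x powr (z - 1) - 1) / x)) (at x)"
proof -
  have "((\<lambda>x. \<beta> * x powr (z - 1) - ln (real q * x)) has_real_derivative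
      (\<beta> * ((z - 1) * x powr (z - 1 - 1)) - (1 / (real q * x) * real q))) (at x)"
    using assms by (intro DERIV_diff DERIV_cmult has_real_derivative_powr
        DERIV_chain2[OF DERIV_ln_divide] DERIV_cmult_Id) auto
  moreover have "\<beta> * ((z - 1) * x powr (z - 1 - 1)) - (1 / (real q * x) * real q)
     = (\<beta> * (z - 1) * x powr (z - 1) - 1) / x"
  proof -
    have "x powr (z - 1 - 1) = x powr (z - 1) / x powr 1" by (rule powr_diff)
    also have "\<dots> = x powr (z - 1) / x" using assms by (simp add: powr_one)
    finally have e: "x powr (z - 1 - 1) = x powr (z - 1) / x" .
    show ?thesis unfolding e using assms by (simp add: field_simps)
  qed
  ultimately show ?thesis unfolding gfun_def[abs_def] by simp
qed

lemma u_pos: "\<beta> > 0 \<Longrightarrow> z > 1 \<Longrightarrow> u_tilde \<beta> z > 0"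
  unfolding u_tilde_def by simp

lemma u_pow: assumes "\<beta> > 0" "z > 1" shows "u_tilde \<beta> z powr (z - 1) = 1 / (\<beta> * (z - 1))"
proof -
  have "u_tilde \<beta> z powr (z - 1) = (\<beta> * (z - 1)) powr (-1)"
    unfolding u_tilde_def powr_powr using assms by simp
  thus ?thesis using assms by (simp add: powr_minus_divide)
qed

lemma g_cont: "q > 0 \<Longrightarrow> 0 < a \<Longrightarrow> continuous_on {a..b} (gfun \<beta> q z)"
  by (rule continuous_at_imp_continuous_on) (metis DERIV_isCont g_deriv atLeastAtMost_iff less_le_trans)

lemma g_dec:
  assumes "\<beta> > 0" "z > 1" "q > 0" "0 < x" "x < y" "y \<le> u_tilde \<beta> z"
  shows "gfun \<beta> q z y < gfun \<beta> q z x"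
proof (rule DERIV_neg_imp_decreasing_open[OF assms(5)])
  show "continuous_on {x..y} (gfun \<beta> q z)" using g_cont assms by blast
  fix t assume t: "x < t" "t < y"
  have "t powr (z - 1) < u_tilde \<beta> z powr (z - 1)"
    using t assms by (intro powr_less_mono2) auto
  hence "t powr (z - 1) < 1 / (\<beta> * (z - 1))" using u_pow[OF assms(1,2)] by simp
  hence "(\<beta> * (z - 1)) * t powr (z - 1) < (\<beta> * (z - 1)) * (1 / (\<beta> * (z - 1)))"
    using assms(1,2) by (intro mult_strict_left_mono) auto
  hence "\<beta> * (z - 1) * t powr (z - 1) - 1 < 0" using assms(1,2) by simp
  moreover have tp: "t > 0" using t assms(4) by linarith
  ultimately have "(\<beta> * (z - 1) * t powr (z - 1) - 1) / t < 0" by (rule divide_neg_pos)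
  with g_deriv[OF tp assms(3)]
  show "\<exists>y. (gfun \<beta> q z has_real_derivative y) (at t) \<and> y < 0" by blast
qed

lemma g_inc:
  assumes "\<beta> > 0" "z > 1" "q > 0" "u_tilde \<beta> z \<le> x" "x < y"
  shows "gfun \<beta> q z x < gfun \<beta> q z y"
proof (rule DERIV_pos_imp_increasing_open[OF assms(5)])
  show "continuous_on {x..y} (gfun \<beta> q z)" using g_cont assms u_pos by (meson less_le_trans)
  fix t assume t: "x < t" "t < y"
  have "u_tilde \<beta> z powr (z - 1) < t powr (z - 1)"
    using t assms u_pos[OF assms(1,2)] by (intro powr_less_mono2) auto
  hence "1 / (\<beta> * (z - 1)) < t powr (z - 1)" using u_pow[OF assms(1,2)] by simp
  hence "(\<beta> * (z - 1)) * (1 / (\<beta> * (z - 1))) < (\<beta> * (z - 1)) * t powr (z - 1)"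
    using assms(1,2) by (intro mult_strict_left_mono) auto
  hence "\<beta> * (z - 1) * t powr (z - 1) - 1 > 0" using assms(1,2) by simp
  moreover have tp: "t > 0" using t assms u_pos[OF assms(1,2)] by linarith
  ultimately have "(\<beta> * (z - 1) * t powr (z - 1) - 1) / t > 0" by simp
  with g_deriv[OF tp assms(3)]
  show "\<exists>y. (gfun \<beta> q z has_real_derivative y) (at t) \<and> y > 0" by blast
qed

theorem lemma5p3:
  fixes q :: nat and z \<beta> :: real and \<nu> :: "nat \<Rightarrow> real"
  assumes "q \<ge> 2" and "z \<ge> 2" and "\<beta> > 0"
    and "prob_vec q \<nu>"
    and "\<forall>\<mu>. prob_vec q \<mu> \<longrightarrow> Gamma \<beta> q z \<nu> \<le> Gamma \<beta> q z \<mu>"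
    and "\<forall>i j. 1 \<le> i \<and> i \<le> j \<and> j \<le> q \<longrightarrow> \<nu> j \<le> \<nu> i"
  shows "(\<nu> 1 \<le> u_tilde \<beta> z \<longrightarrow>
            (\<forall>k\<in>{2..q}. \<nu> k = \<nu> 1) \<and> (\<forall>k\<in>{1..q}. \<nu> k = 1 / real q))
       \<and> (\<nu> 1 > u_tilde \<beta> z \<longrightarrow>
            (\<exists>\<nu>0. 0 < \<nu>0 \<and> \<nu>0 < \<nu> 1 \<and> gfun \<beta> q z \<nu>0 = gfun \<beta> q z (\<nu> 1)
               \<and> (\<forall>k\<in>{2..q}. \<nu> k \<in> {\<nu>0, \<nu> 1})
               \<and> (\<exists>l::nat. 1 \<le> l \<and> l \<le> q
                    \<and> (\<forall>k\<in>{1..l}. \<nu> k = \<nu> 1)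
                    \<and> (\<forall>k\<in>{l<..q}. \<nu> k = \<nu>0)
                    \<and> \<nu> 1 = (1 - real (q - l) * \<nu>0) / real l)))"
proof -
  have q0: "q > 0" "real q > 0" using assms(1) by auto
  have z1: "z > 1" "z \<noteq> 0" using assms(2) by auto
  have nn: "\<And>k. k \<in> {1..q} \<Longrightarrow> \<nu> k \<ge> 0" using assms(4) unfolding prob_vec_def by auto
  have s1: "(\<Sum>i=1..q. \<nu> i) = 1" using assms(4) unfolding prob_vec_def by auto
  have le1: "\<nu> k \<le> 1" if k: "k \<in> {1..q}" for k
  proof -
    have "\<nu> k \<le> (\<Sum>i=1..q. \<nu> i)" by (rule member_le_sum) (use k nn in auto)
    thus "\<nu> k \<le> 1" using s1 by simp
  qed
  have key: "phi \<beta> q z (\<nu> i) + phi \<beta> q z (\<nu> j) \<le> phi \<beta> q z (\<nu> i + t) + phi \<beta> q z (\<nu> j - t)"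
    if ij: "i \<in> {1..q}" "j \<in> {1..q}" "i \<noteq> j" and t: "\<nu> i + t \<ge> 0" "\<nu> j - t \<ge> 0" for i j t
  proof -
    define \<mu> where "\<mu> = \<nu>(i := \<nu> i + t, j := \<nu> j - t)"
    have "(\<Sum>k=1..q. \<mu> k) + \<nu> i + \<nu> j = (\<Sum>k=1..q. \<nu> k) + (\<nu> i + t) + (\<nu> j - t)"
      using sum_upd2[of "{1..q}" i j "\<lambda>x. x" \<nu> "\<nu> i + t" "\<nu> j - t"] ij unfolding \<mu>_def by simp
    hence "(\<Sum>k=1..q. \<mu> k) = 1" using s1 by simp
    moreover have "\<forall>k\<in>{1..q}. \<mu> k \<ge> 0" using nn t unfolding \<mu>_def by auto
    ultimately have "prob_vec q \<mu>" unfolding prob_vec_def by simp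
    hence "Gamma \<beta> q z \<nu> \<le> Gamma \<beta> q z \<mu>" using assms(5) by blast
    thus ?thesis
      using sum_upd2[OF finite_atLeastAtMost ij(1) ij(2) ij(3), of "phi \<beta> q z" \<nu> "\<nu> i + t" "\<nu> j - t"]
      unfolding Gamma_phi \<mu>_def by linarith
  qed
  have phi0: "phi \<beta> q z 0 = 0" by (simp add: phi_def)
  have pos: "\<nu> j > 0" if j: "j \<in> {1..q}" for j
  proof (rule ccontr)
    assume "\<not> \<nu> j > 0"
    hence vj: "\<nu> j = 0" using nn[OF j] by linarith
    have "\<exists>i\<in>{1..q}. \<nu> i > 0"
    proof (rule ccontr)
      assume "\<not> ?thesis"
      hence "(\<Sum>i=1..q. \<nu> i) \<le> 0" by (intro sum_nonpos) (force simp: not_less)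
      thus False using s1 by simp
    qed
    then obtain i where i: "i \<in> {1..q}" "\<nu> i > 0" by blast
    have ij: "i \<noteq> j" using vj i by auto
    have a1: "\<nu> i \<le> 1" using le1 i by blast
    define K where "K = 1 - \<beta> + ln (real q * \<nu> i / 2)"
    define t where "t = min (\<nu> i / 2) (exp (K - 1) / real q)"
    have t0a: "t > 0" using i q0 by (auto simp: t_def)
    have t0b: "t \<le> \<nu> i / 2" unfolding t_def by (rule min.cobounded1)
    note t0 = t0a t0b
    have "t \<le> exp (K - 1) / real q" unfolding t_def by simp
    hence "real q * t \<le> exp (K - 1)" using q0 by (simp add: field_simps)
    hence lnt: "ln (real q * t) \<le> K - 1"
      using ln_le_cancel_iff[of "real q * t" "exp (K - 1)"] t0 q0 by simp
    have der: "\<And>x. \<nu> i - t \<le> x \<Longrightarrow> x \<le> \<nu> i \<Longrightarrow> (phi \<beta> q z has_real_derivative 1 - gfun \<beta> q z x) (at x)"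
      by (rule phi_deriv) (use t0 i q0 z1 in auto)
    have ltt: "\<nu> i - t < \<nu> i" using t0 by simp
    obtain \<xi> where xi: "\<nu> i - t < \<xi>" "\<xi> < \<nu> i"
      "phi \<beta> q z (\<nu> i) - phi \<beta> q z (\<nu> i - t) = (\<nu> i - (\<nu> i - t)) * (1 - gfun \<beta> q z \<xi>)"
      using MVT2[OF ltt der] by blast
    have xp: "\<xi> > 0" "\<xi> \<le> 1" "\<xi> \<ge> \<nu> i / 2" using xi t0 a1 by auto
    have "\<xi> powr (z - 1) \<le> 1" by (rule powr_le1) (use xp z1 in auto)
    hence b1: "\<beta> * \<xi> powr (z - 1) \<le> \<beta>" using assms(3) by (simp add: mult_left_le)
    have b2: "ln (real q * \<nu> i / 2) \<le> ln (real q * \<xi>)"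
      using ln_le_cancel_iff[of "real q * \<nu> i / 2" "real q * \<xi>"] xp q0 i by simp
    have "1 - gfun \<beta> q z \<xi> \<ge> K" using b1 b2 unfolding gfun_def K_def by linarith
    hence "t * K \<le> t * (1 - gfun \<beta> q z \<xi>)" using t0 by (intro mult_left_mono) auto
    hence m1: "phi \<beta> q z (\<nu> i) - phi \<beta> q z (\<nu> i - t) \<ge> t * K" using xi by simp
    have "t * ln (real q * t) \<le> t * (K - 1)" using lnt t0 by (intro mult_left_mono) auto
    moreover have "(\<beta> / z) * t powr z \<ge> 0" using assms(3) z1 by simp
    ultimately have m2: "phi \<beta> q z t \<le> t * K - t" unfolding phi_def by (simp add: algebra_simps)
    have "phi \<beta> q z (\<nu> j) + phi \<beta> q z (\<nu> i) \<le> phi \<beta> q z (\<nu> j + t) + phi \<beta> q z (\<nu> i - t)"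
      by (rule key) (use j i ij t0 vj in auto)
    thus False using m1 m2 vj phi0 t0 by simp
  qed
  have foc: "gfun \<beta> q z (\<nu> i) = gfun \<beta> q z (\<nu> j)" if ij: "i \<in> {1..q}" "j \<in> {1..q}" for i j
  proof (cases "i = j")
    case True thus ?thesis by simp
  next
    case False
    define h where "h = (\<lambda>t. phi \<beta> q z (\<nu> i + t) + phi \<beta> q z (\<nu> j - t))"
    have g1: "((\<lambda>t. \<nu> i + t) has_real_derivative 1) (at 0)"
      using DERIV_add[OF DERIV_const DERIV_ident, of "\<nu> i" 0 UNIV] by simp
    have g2: "((\<lambda>t. \<nu> j - t) has_real_derivative -1) (at 0)"
      using DERIV_diff[OF DERIV_const DERIV_ident, of "\<nu> j" 0 UNIV] by simp
    have p1: "(phi \<beta> q z has_real_derivative 1 - gfun \<beta> q z (\<nu> i)) (at ((\<lambda>t. \<nu> i + t) 0))"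
      using phi_deriv pos[OF ij(1)] q0 z1 by simp
    have p2: "(phi \<beta> q z has_real_derivative 1 - gfun \<beta> q z (\<nu> j)) (at ((\<lambda>t. \<nu> j - t) 0))"
      using phi_deriv pos[OF ij(2)] q0 z1 by simp
    have d: "(h has_real_derivative (1 - gfun \<beta> q z (\<nu> i)) * 1 + (1 - gfun \<beta> q z (\<nu> j)) * (-1)) (at 0)"
      unfolding h_def using DERIV_add[OF DERIV_chain2[OF p1 g1] DERIV_chain2[OF p2 g2]] by simp
    have mp: "min (\<nu> i) (\<nu> j) > 0" using pos[OF ij(1)] pos[OF ij(2)] by simp
    have "\<forall>y. \<bar>0 - y\<bar> < min (\<nu> i) (\<nu> j) \<longrightarrow> h 0 \<le> h y"
    proof (intro allI impI)
      fix y assume "\<bar>0 - y\<bar> < min (\<nu> i) (\<nu> j)"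
      hence "\<nu> i + y \<ge> 0" "\<nu> j - y \<ge> 0" by auto
      thus "h 0 \<le> h y" unfolding h_def using key[OF ij False] by simp
    qed
    hence "(1 - gfun \<beta> q z (\<nu> i)) * 1 + (1 - gfun \<beta> q z (\<nu> j)) * (-1) = 0"
      using DERIV_local_min[OF d mp] by blast
    thus ?thesis by simp
  qed
  have ord: "\<And>i j. 1 \<le> i \<Longrightarrow> i \<le> j \<Longrightarrow> j \<le> q \<Longrightarrow> \<nu> j \<le> \<nu> i" using assms(6) by blast
  have one: "1 \<in> {1..q}" using assms(1) by simp
  have le_1: "\<nu> k \<le> \<nu> 1" if "k \<in> {1..q}" for k using ord[of 1 k] that by auto
  have part1: "\<nu> 1 \<le> u_tilde \<beta> z \<longrightarrow>
            (\<forall>k\<in>{2..q}. \<nu> k = \<nu> 1) \<and> (\<forall>k\<in>{1..q}. \<nu> k = 1 / real q)"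
  proof
    assume u: "\<nu> 1 \<le> u_tilde \<beta> z"
    have eq: "\<nu> k = \<nu> 1" if k: "k \<in> {1..q}" for k
    proof (rule ccontr)
      assume "\<nu> k \<noteq> \<nu> 1"
      hence "\<nu> k < \<nu> 1" using le_1[OF k] by linarith
      hence "gfun \<beta> q z (\<nu> 1) < gfun \<beta> q z (\<nu> k)" using g_dec[OF assms(3) z1(1) q0(1) pos[OF k] _ u] by blast
      thus False using foc[OF k one] by simp
    qed
    have "(\<Sum>i=1..q. \<nu> i) = (\<Sum>i=1..q. \<nu> 1)" by (rule sum.cong) (simp, rule eq)
    hence "real q * \<nu> 1 = 1" using s1 by simp
    hence v1: "\<nu> 1 = 1 / real q" using q0 by (simp add: field_simps)
    show "(\<forall>k\<in>{2..q}. \<nu> k = \<nu> 1) \<and> (\<forall>k\<in>{1..q}. \<nu> k = 1 / real q)"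
    proof (intro conjI ballI)
      fix k assume "k \<in> {2..q}"
      hence "k \<in> {1..q}" by simp
      thus "\<nu> k = \<nu> 1" by (rule eq)
    next
      fix k assume "k \<in> {1..q}"
      from eq[OF this] v1 show "\<nu> k = 1 / real q" by simp
    qed
  qed
  have part2: "\<nu> 1 > u_tilde \<beta> z \<longrightarrow>
            (\<exists>\<nu>0. 0 < \<nu>0 \<and> \<nu>0 < \<nu> 1 \<and> gfun \<beta> q z \<nu>0 = gfun \<beta> q z (\<nu> 1)
               \<and> (\<forall>k\<in>{2..q}. \<nu> k \<in> {\<nu>0, \<nu> 1})
               \<and> (\<exists>l::nat. 1 \<le> l \<and> l \<le> q
                    \<and> (\<forall>k\<in>{1..l}. \<nu> k = \<nu> 1)
                    \<and> (\<forall>k\<in>{l<..q}. \<nu> k = \<nu>0)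
                    \<and> \<nu> 1 = (1 - real (q - l) * \<nu>0) / real l))"
  proof
    assume u: "\<nu> 1 > u_tilde \<beta> z"
    have up: "u_tilde \<beta> z > 0" using u_pos assms(3) z1 by blast
    define c where "c = \<bar>gfun \<beta> q z (\<nu> 1)\<bar> + 1"
    define x1 where "x1 = min (u_tilde \<beta> z / 2) (exp (- c) / real q)"
    have x10: "x1 > 0" "x1 < u_tilde \<beta> z" using up q0 by (auto simp: x1_def)
    have "x1 \<le> exp (- c) / real q" unfolding x1_def by simp
    hence "real q * x1 \<le> exp (- c)" using q0 by (simp add: field_simps)
    hence "ln (real q * x1) \<le> - c"
      using ln_le_cancel_iff[of "real q * x1" "exp (- c)"] x10 q0 by simp
    moreover have "\<beta> * x1 powr (z - 1) \<ge> 0" using assms(3) by simp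
    ultimately have gx1: "gfun \<beta> q z (\<nu> 1) \<le> gfun \<beta> q z x1" unfolding gfun_def c_def by linarith
    have gu: "gfun \<beta> q z (u_tilde \<beta> z) < gfun \<beta> q z (\<nu> 1)"
      using g_inc[OF assms(3) z1(1) q0(1) order.refl u] .
    have "\<exists>x. x1 \<le> x \<and> x \<le> u_tilde \<beta> z \<and> gfun \<beta> q z x = gfun \<beta> q z (\<nu> 1)"
      by (rule IVT2') (use gu gx1 x10 g_cont[OF q0(1) x10(1)] in auto)
    then obtain \<nu>0 where n0: "x1 \<le> \<nu>0" "\<nu>0 \<le> u_tilde \<beta> z" "gfun \<beta> q z \<nu>0 = gfun \<beta> q z (\<nu> 1)"
      by blast
    have n0u: "\<nu>0 < u_tilde \<beta> z" proof (rule ccontr)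
      assume "\<not> \<nu>0 < u_tilde \<beta> z"
      hence "\<nu>0 = u_tilde \<beta> z" using n0(2) by linarith
      thus False using n0(3) gu by simp
    qed
    have n0p: "\<nu>0 > 0" using n0 x10 by linarith
    have mem: "\<nu> k \<in> {\<nu>0, \<nu> 1}" if k: "k \<in> {1..q}" for k
    proof (cases "\<nu> k = \<nu> 1")
      case True thus ?thesis by simp
    next
      case False
      hence lt: "\<nu> k < \<nu> 1" using le_1[OF k] by linarith
      have gk: "gfun \<beta> q z (\<nu> k) = gfun \<beta> q z \<nu>0" using foc[OF k one] n0 by simp
      have ku: "\<nu> k < u_tilde \<beta> z"
      proof (rule ccontr)
        assume "\<not> \<nu> k < u_tilde \<beta> z"
        hence "u_tilde \<beta> z \<le> \<nu> k" by simp
        from g_inc[OF assms(3) z1(1) q0(1) this lt] foc[OF k one] show False by simp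
      qed
      have "\<nu> k = \<nu>0"
      proof (rule ccontr)
        assume ne: "\<nu> k \<noteq> \<nu>0"
        consider "\<nu> k < \<nu>0" | "\<nu>0 < \<nu> k" using ne by linarith
        thus False
        proof cases
          case 1
          from g_dec[OF assms(3) z1(1) q0(1) pos[OF k] 1 n0(2)] gk show False by simp
        next
          case 2
          from g_dec[OF assms(3) z1(1) q0(1) n0p 2 order.strict_implies_order[OF ku]] gk show False by simp
        qed
      qed
      thus ?thesis by simp
    qed
    define S where "S = {k \<in> {1..q}. \<nu> k = \<nu> 1}"
    define l where "l = Max S"
    have finS: "finite S" "1 \<in> S" using one by (auto simp: S_def)
    have lS: "l \<in> S" unfolding l_def using Max_in finS by blast
    have l1: "1 \<le> l" "l \<le> q" "\<nu> l = \<nu> 1" using lS S_def by auto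
    have A: "\<forall>k\<in>{1..l}. \<nu> k = \<nu> 1"
    proof
      fix k assume k: "k \<in> {1..l}"
      have "\<nu> l \<le> \<nu> k" using ord[of k l] k l1 by auto
      moreover have "\<nu> k \<le> \<nu> 1" using ord[of 1 k] k l1 by auto
      ultimately show "\<nu> k = \<nu> 1" using l1 by linarith
    qed
    have B: "\<forall>k\<in>{l<..q}. \<nu> k = \<nu>0"
    proof
      fix k assume k: "k \<in> {l<..q}"
      have "\<nu> k \<noteq> \<nu> 1"
      proof
        assume "\<nu> k = \<nu> 1"
        hence "k \<in> S" using k l1 by (auto simp: S_def)
        hence "k \<le> l" unfolding l_def using finS by simp
        thus False using k by simp
      qed
      thus "\<nu> k = \<nu>0" using mem[of k] k l1 by auto
    qed
    have U: "{1..q} = {1..l} \<union> {l<..q}" using l1 by auto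
    have "(\<Sum>i=1..q. \<nu> i) = (\<Sum>i=1..l. \<nu> i) + (\<Sum>i\<in>{l<..q}. \<nu> i)"
      by (subst U, rule sum.union_disjoint) auto
    also have "(\<Sum>i=1..l. \<nu> i) = (\<Sum>i=1..l. \<nu> 1)" by (rule sum.cong) (use A in blast)+
    also have "(\<Sum>i\<in>{l<..q}. \<nu> i) = (\<Sum>i\<in>{l<..q}. \<nu>0)" by (rule sum.cong) (use B in blast)+
    finally have "real l * \<nu> 1 + real (q - l) * \<nu>0 = 1" using s1 by simp
    hence lv: "\<nu> 1 = (1 - real (q - l) * \<nu>0) / real l" using l1 by (simp add: field_simps)
    have m2: "\<forall>k\<in>{2..q}. \<nu> k \<in> {\<nu>0, \<nu> 1}" using mem by auto
    have lt01: "\<nu>0 < \<nu> 1" using n0u u by linarith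
    show "\<exists>\<nu>0. 0 < \<nu>0 \<and> \<nu>0 < \<nu> 1 \<and> gfun \<beta> q z \<nu>0 = gfun \<beta> q z (\<nu> 1)
               \<and> (\<forall>k\<in>{2..q}. \<nu> k \<in> {\<nu>0, \<nu> 1})
               \<and> (\<exists>l::nat. 1 \<le> l \<and> l \<le> q
                    \<and> (\<forall>k\<in>{1..l}. \<nu> k = \<nu> 1)
                    \<and> (\<forall>k\<in>{l<..q}. \<nu> k = \<nu>0)
                    \<and> \<nu> 1 = (1 - real (q - l) * \<nu>0) / real l)"
      using n0p lt01 n0(3) m2 A B l1(1,2) lv by blast
  qed
  show ?thesis using part1 part2 by blast
qed

end
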